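(* For all $A\in\mathrm{M}_2(E_0)$ and $B\in\mathrm{M}_2(E_1)$, \[\Big\{\tfrac12\mathrm{tr}(B)\mathrm{tr}(A)+\tfrac12\mathrm{tr}(A)\mathrm{tr}(B)-\tfrac12\mathrm{tr}(AB)-\tfrac12\mathrm{tr}(BA)\Big\}I_2-\mathrm{tr}(B)A-\mathrm{tr}(A)B+AB+BA=0.\]
   Context: $K$ is a field of characteristic zero. $E$ is the infinite-dimensional Grassmann (exterior) algebra over $K$, generated by countably many indeterminates $v_1,v_2,\dots$ subject to $v_iv_j+v_jv_i=0$ for all $i,j$. $E=E_0\oplus E_1$ is its natural $\mathbb{Z}_2$-grading: $E_0$ (resp. $E_1$) is the $K$-span of products of an even (resp. odd) number of generators; $E_0$ is commutative and central in $E$. $\mathrm{M}_n(R)$ denotes the $n\times n$ matrices over $R$, $I_2$ the $2\times2$ identity matrix, and $\mathrm{tr}$ the sum of diagonal entries. *)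

theory Defs
  imports Main
begin

text \<open>The infinite Grassmann algebra E over a field 'k, generated by v_0, v_1, ...
  An element is a function from (finite) sets S of generator indices to 'k,
  x S being the coefficient of the monomial v_S = v_{s1} ... v_{sm} (s1 < ... < sm),
  with finitely many nonzero coefficients.\<close>

type_synonym 'k grass = "nat set \<Rightarrow> 'k"

definition grass :: "'k::field grass set" where
  "grass = {x. finite {S. x S \<noteq> 0} \<and> (\<forall>S. x S \<noteq> 0 \<longrightarrow> finite S)}"

definition grass0 :: "'k::field grass set" where
  "grass0 = {x \<in> grass. \<forall>S. x S \<noteq> 0 \<longrightarrow> even (card S)}"

definition grass1 :: "'k::field grass set" where
  "grass1 = {x \<in> grass. \<forall>S. x S \<noteq> 0 \<longrightarrow> odd (card S)}"

text \<open>Sign of v_S v_T = gsign S T v_{S \<union> T} for disjoint S, T: number of inversions.\<close>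
definition gsign :: "nat set \<Rightarrow> nat set \<Rightarrow> 'k::field" where
  "gsign S T = (-1) ^ card {(s, t). s \<in> S \<and> t \<in> T \<and> t < s}"

definition gadd :: "'k::field grass \<Rightarrow> 'k grass \<Rightarrow> 'k grass" where
  "gadd x y = (\<lambda>U. x U + y U)"

definition gsub :: "'k::field grass \<Rightarrow> 'k grass \<Rightarrow> 'k grass" where
  "gsub x y = (\<lambda>U. x U - y U)"

definition gscale :: "'k::field \<Rightarrow> 'k grass \<Rightarrow> 'k grass" where
  "gscale c x = (\<lambda>U. c * x U)"

definition gzero :: "'k::field grass" where
  "gzero = (\<lambda>U. 0)"

definition gone :: "'k::field grass" where
  "gone = (\<lambda>U. if U = {} then 1 else 0)"

definition gmult :: "'k::field grass \<Rightarrow> 'k grass \<Rightarrow> 'k grass" where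
  "gmult x y = (\<lambda>U. if finite U then
      (\<Sum>S\<in>Pow U. gsign S (U - S) * x S * y (U - S)) else 0)"

text \<open>2x2 matrices over E: functions on indices, only i, j \<in> {0,1} are relevant.\<close>
type_synonym 'k gmat = "nat \<Rightarrow> nat \<Rightarrow> 'k grass"

definition gmat_in :: "'k::field gmat \<Rightarrow> 'k grass set \<Rightarrow> bool" where
  "gmat_in A R \<longleftrightarrow> (\<forall>i<2. \<forall>j<2. A i j \<in> R)"

definition gmmult :: "'k::field gmat \<Rightarrow> 'k gmat \<Rightarrow> 'k gmat" where
  "gmmult A B = (\<lambda>i j. gadd (gmult (A i 0) (B 0 j)) (gmult (A i 1) (B 1 j)))"

definition gtr :: "'k::field gmat \<Rightarrow> 'k grass" where
  "gtr A = gadd (A 0 0) (A 1 1)"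

definition gid :: "'k::field gmat" where
  "gid = (\<lambda>i j. if i = j then gone else gzero)"

definition gmat_add :: "'k::field gmat \<Rightarrow> 'k gmat \<Rightarrow> 'k gmat" where
  "gmat_add A B = (\<lambda>i j. gadd (A i j) (B i j))"

definition gmat_sub :: "'k::field gmat \<Rightarrow> 'k gmat \<Rightarrow> 'k gmat" where
  "gmat_sub A B = (\<lambda>i j. gsub (A i j) (B i j))"

definition gmat_smult :: "'k::field grass \<Rightarrow> 'k gmat \<Rightarrow> 'k gmat" where
  "gmat_smult c A = (\<lambda>i j. gmult c (A i j))"

definition gmat_eq :: "'k::field gmat \<Rightarrow> 'k gmat \<Rightarrow> bool" where
  "gmat_eq A B \<longleftrightarrow> (\<forall>i<2. \<forall>j<2. A i j = B i j)"

end

theory Submission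
  imports Defs
begin


lemma gsign_sym:
  assumes fS: "finite S" and fT: "finite T" and d: "S \<inter> T = {}" and ev: "even (card T)"
  shows "(gsign S T :: 'k::field) = gsign T S"
proof -
  define I1 where "I1 = {(s, t). s \<in> S \<and> t \<in> T \<and> t < s}"
  define I2 where "I2 = {(t, s). t \<in> T \<and> s \<in> S \<and> s < t}"
  define J where "J = {(s, t). s \<in> S \<and> t \<in> T \<and> s < t}"
  have "I2 = (\<lambda>(s,t). (t,s)) ` J" unfolding I2_def J_def by auto
  moreover have "inj_on (\<lambda>(s,t). (t,s)) J" by (auto simp: inj_on_def)
  ultimately have c2: "card I2 = card J" by (simp add: card_image)
  have u: "I1 \<union> J = S \<times> T" unfolding I1_def J_def using d by auto
  have dj: "I1 \<inter> J = {}" unfolding I1_def J_def by auto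
  have fin: "finite I1" "finite J" using fS fT unfolding I1_def J_def
    by (auto intro: finite_subset[of _ "S \<times> T"])
  have "card I1 + card J = card S * card T"
    using card_Un_disjoint[OF fin dj] u by (simp add: card_cartesian_product)
  hence "even (card I1 + card J)" using ev by simp
  hence "even (card I1) = even (card J)" by simp
  hence "((-1::'k) ^ card I1) = (-1) ^ card J"
    by (cases "even (card J)") (auto simp: neg_one_even_power neg_one_odd_power)
  thus ?thesis unfolding gsign_def I1_def[symmetric] c2[symmetric]
    by (simp add: I2_def)
qed

lemma gm_comm:
  assumes x: "x \<in> grass0"
  shows "gmult y x = gmult x y"
proof
  fix U :: "nat set"
  show "gmult y x U = gmult x y U"
  proof (cases "finite U")
    case False thus ?thesis by (simp add: gmult_def)
  next
    case True
    have "gmult y x U = (\<Sum>S\<in>Pow U. gsign S (U - S) * y S * x (U - S))"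
      using True by (simp add: gmult_def)
    also have "\<dots> = (\<Sum>T\<in>Pow U. gsign (U - T) (U - (U - T)) * y (U - T) * x (U - (U - T)))"
      by (rule sum.reindex_bij_witness[where i="\<lambda>S. U - S" and j="\<lambda>S. U - S"])
        (auto simp: Diff_Diff_Int Int_absorb1)
    also have "\<dots> = (\<Sum>T\<in>Pow U. gsign T (U - T) * x T * y (U - T))"
    proof (rule sum.cong)
      fix T assume T: "T \<in> Pow U"
      hence e: "U - (U - T) = T" by auto
      show "gsign (U - T) (U - (U - T)) * y (U - T) * x (U - (U - T)) = gsign T (U - T) * x T * y (U - T)"
      proof (cases "x T = 0")
        case False
        hence "even (card T)" using x by (auto simp: grass0_def)
        moreover have "finite T" using T True by (auto intro: finite_subset)
        ultimately have "gsign (U - T) T = (gsign T (U - T) :: 'a)"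
          using True by (intro gsign_sym) auto
        thus ?thesis using e by simp
      qed (simp add: e)
    qed simp
    also have "\<dots> = gmult x y U" using True by (simp add: gmult_def)
    finally show ?thesis .
  qed
qed

lemma gm_one: "gmult x gone = (\<lambda>U. if finite U then x U else 0)"
proof
  fix U :: "nat set"
  show "gmult x gone U = (if finite U then x U else 0)"
  proof (cases "finite U")
    case True
    have e: "{(s, t). s \<in> U \<and> t \<in> U \<and> t \<notin> U \<and> t < s} = {}" by auto
    have "gmult x gone U = (\<Sum>S\<in>Pow U. if S = U then x U else 0)"
      using True unfolding gmult_def gone_def
      by (simp only: True if_True) (rule sum.cong[OF refl], auto simp: gsign_def Diff_eq_empty_iff e)
    also have "\<dots> = x U" using True by simp
    finally show ?thesis using True by simp
  qed (simp add: gmult_def)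
qed

lemma gm_zero: "gmult x gzero = gzero"
  by (auto simp: gmult_def gzero_def)

lemma gm_lin:
  "gmult (gadd x y) z = gadd (gmult x z) (gmult y z)"
  "gmult z (gadd x y) = gadd (gmult z x) (gmult z y)"
  "gmult (gsub x y) z = gsub (gmult x z) (gmult y z)"
  "gmult z (gsub x y) = gsub (gmult z x) (gmult z y)"
  "gmult (gscale c x) z = gscale c (gmult x z)"
  "gmult z (gscale c x) = gscale c (gmult z x)"
  by (auto simp: gmult_def gadd_def gsub_def gscale_def sum.distrib sum_subtractf
      sum_distrib_left algebra_simps intro!: sum.cong)


theorem corollary2p2:
  fixes A B :: "'k::field_char_0 gmat"
  assumes "gmat_in A grass0" and "gmat_in B grass1"
  shows "gmat_eq
    (gmat_add (gmat_add (gmat_sub (gmat_sub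
       (gmat_smult
          (gsub (gsub (gadd (gscale (1/2) (gmult (gtr B) (gtr A)))
                            (gscale (1/2) (gmult (gtr A) (gtr B))))
                      (gscale (1/2) (gtr (gmmult A B))))
                (gscale (1/2) (gtr (gmmult B A))))
          gid)
       (gmat_smult (gtr B) A))
       (gmat_smult (gtr A) B))
       (gmmult A B))
       (gmmult B A))
    (\<lambda>i j. gzero)"
proof -
  have A: "A i j \<in> grass0" if "i<2" "j<2" for i j using assms(1) that by (auto simp: gmat_in_def)
  have B: "B i j \<in> grass1" if "i<2" "j<2" for i j using assms(2) that by (auto simp: gmat_in_def)
  have a00: "A 0 0 \<in> grass0" and a01: "A 0 1 \<in> grass0" and a10: "A 1 0 \<in> grass0"
    and a11: "A 1 1 \<in> grass0" using A by auto
  have inf0: "x U = 0" if "x \<in> grass1 \<or> x \<in> grass0" "infinite U" for x :: "'k grass" and U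
    using that by (auto simp: grass0_def grass1_def grass_def)
  have key: "\<And>i j. i \<in> {0,1} \<Longrightarrow> j \<in> {0,1} \<Longrightarrow> (gmat_add (gmat_add (gmat_sub (gmat_sub
       (gmat_smult
          (gsub (gsub (gadd (gscale (1/2) (gmult (gtr B) (gtr A)))
                            (gscale (1/2) (gmult (gtr A) (gtr B))))
                      (gscale (1/2) (gtr (gmmult A B))))
                (gscale (1/2) (gtr (gmmult B A))))
          gid)
       (gmat_smult (gtr B) A))
       (gmat_smult (gtr A) B))
       (gmmult A B))
       (gmmult B A)) i j U = gzero U" for U
  proof (cases "finite U")
    case False
    fix i j :: nat assume "i \<in> {0,1}" "j \<in> {0,1}"
    then show "?thesis i j" using False inf0[OF _ False] A B
      by (auto simp: gmat_add_def gmat_sub_def gmat_smult_def gid_def gmmult_def gtr_def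
          gadd_def gsub_def gscale_def gzero_def gmult_def)
  next
    case True
    fix i j :: nat assume "i \<in> {0,1}" "j \<in> {0,1}"
    then show "?thesis i j" using True
      apply (simp only: gmat_add_def gmat_sub_def gmat_smult_def gid_def gmmult_def gtr_def)
      apply (auto simp only: insert_iff empty_iff simp_thms gm_lin gm_comm[OF a00]
          gm_comm[OF a01] gm_comm[OF a10] gm_comm[OF a11] gm_zero gm_one if_True if_False
          refl zero_neq_one one_neq_zero)
      apply (simp_all add: gadd_def gsub_def gscale_def gzero_def field_simps)
      done
  qed
  have lt: "i \<in> {0,1}" if "i < (2::nat)" for i using that by auto
  show ?thesis unfolding gmat_eq_def
    by (intro allI impI ext) (rule key, auto intro: lt)
qed

end
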